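(* Let $G$ be a finite graph with $n$ vertices such that $\mathrm{Aut}(G)$ is isomorphic to the dihedral group $D_t$ of order $2t$; write its elements as $\pi_{\rho^i}$ and $\pi_{\tau\rho^i}$, $i=0,\dots,t-1$, where $\pi_\rho$ has order $t$, $\pi_\tau^2=\pi_{\rho^0}$ is the identity, $\pi_{\tau}\pi_{\rho^i}=\pi_{\rho^{-i}}\pi_\tau$, and $\pi_{\tau\rho^i}=\pi_\tau\pi_{\rho^i}$. Let $t=\prod_{i=1}^s p_i^{r_i}$ be the prime factorization of $t$ and $P^*=\{\pi_{\rho^{t/p_1}},\dots,\pi_{\rho^{t/p_s}}\}$. Then for every positive integer $k$ and every $i\in\{0,\dots,t-1\}$, $$N_=(\{\pi_{\rho^0},\pi_{\tau\rho^i}\})=\sum_{\{\pi_{\tau\rho^i}\}\subseteq P\subseteq\{\pi_{\tau\rho^i}\}\cup P^*}(-1)^{|P|-1}N_{\ge}(P),$$ and $$L(G,k)=\sum_{P\subseteq P^*}(-1)^{|P|}N_{\ge}(P)-\sum_{i=0}^{t-1}N_=(\{\pi_{\rho^0},\pi_{\tau\rho^i}\}).$$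
   Context: A $k$-labeling of $G$ is a map $\phi:V(G)\to\{1,\dots,k\}$; an automorphism $\pi$ preserves $\phi$ if $\phi(\pi(v))=\phi(v)$ for all $v$; $\phi$ is distinguishing if only the identity preserves it; $L(G,k)$ is the number of distinguishing $k$-labelings. For $P\subseteq\mathrm{Aut}(G)$, $N_{\ge}(P)$ is the number of $k$-labelings preserved by every automorphism in $P$ (so $N_{\ge}(\emptyset)=k^n$), and $N_=(P)$ is the number of $k$-labelings whose set of preserving automorphisms is exactly $P$. *)

theory Defs
  imports Main "HOL-Library.FuncSet" "HOL-Combinatorics.Permutations"
    "HOL-Computational_Algebra.Primes"
begin

definition graph :: "'a set \<Rightarrow> ('a \<times> 'a) set \<Rightarrow> bool" where
  "graph V E \<longleftrightarrow> finite V \<and> E \<subseteq> V \<times> V \<and> sym E \<and> (\<forall>v. (v, v) \<notin> E)"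

definition Aut :: "'a set \<Rightarrow> ('a \<times> 'a) set \<Rightarrow> ('a \<Rightarrow> 'a) set" where
  "Aut V E = {\<pi>. \<pi> permutes V \<and> (\<forall>u\<in>V. \<forall>v\<in>V. (u, v) \<in> E \<longleftrightarrow> (\<pi> u, \<pi> v) \<in> E)}"

definition labelings :: "'a set \<Rightarrow> nat \<Rightarrow> ('a \<Rightarrow> nat) set" where
  "labelings V k = V \<rightarrow>\<^sub>E {1..k}"

definition preserves :: "'a set \<Rightarrow> ('a \<Rightarrow> 'a) \<Rightarrow> ('a \<Rightarrow> nat) \<Rightarrow> bool" where
  "preserves V \<pi> \<phi> \<longleftrightarrow> (\<forall>v\<in>V. \<phi> (\<pi> v) = \<phi> v)"

definition distinguishing :: "'a set \<Rightarrow> ('a \<times> 'a) set \<Rightarrow> ('a \<Rightarrow> nat) \<Rightarrow> bool" where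
  "distinguishing V E \<phi> \<longleftrightarrow> (\<forall>\<pi>\<in>Aut V E. preserves V \<pi> \<phi> \<longrightarrow> \<pi> = id)"

definition L :: "'a set \<Rightarrow> ('a \<times> 'a) set \<Rightarrow> nat \<Rightarrow> nat" where
  "L V E k = card {\<phi> \<in> labelings V k. distinguishing V E \<phi>}"

definition N_ge :: "'a set \<Rightarrow> nat \<Rightarrow> ('a \<Rightarrow> 'a) set \<Rightarrow> nat" where
  "N_ge V k P = card {\<phi> \<in> labelings V k. \<forall>\<pi>\<in>P. preserves V \<pi> \<phi>}"

definition N_eq :: "'a set \<Rightarrow> ('a \<times> 'a) set \<Rightarrow> nat \<Rightarrow> ('a \<Rightarrow> 'a) set \<Rightarrow> nat" where
  "N_eq V E k P = card {\<phi> \<in> labelings V k. {\<pi> \<in> Aut V E. preserves V \<pi> \<phi>} = P}"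

end

theory Submission
  imports Defs
begin


lemma ie_count:
  fixes f :: "'b \<Rightarrow> 'c \<Rightarrow> bool"
  assumes "finite S"
  shows "finite A \<Longrightarrow> int (card {x\<in>A. \<forall>q\<in>S. \<not> f q x}) =
     (\<Sum>Q\<in>Pow S. (-1)^card Q * int (card {x\<in>A. \<forall>q\<in>Q. f q x}))"
  using assms
proof (induction S arbitrary: A rule: finite_induct)
  case empty
  then show ?case by simp
next
  case (insert s S)
  define A' where "A' = {x\<in>A. f s x}"
  have fA': "finite A'" using insert.prems unfolding A'_def by simp
  have split: "{x\<in>A. \<forall>q\<in>S. \<not> f q x} = {x\<in>A. \<forall>q\<in>insert s S. \<not> f q x} \<union> {x\<in>A'. \<forall>q\<in>S. \<not> f q x}"
    unfolding A'_def by auto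
  have disj: "{x\<in>A. \<forall>q\<in>insert s S. \<not> f q x} \<inter> {x\<in>A'. \<forall>q\<in>S. \<not> f q x} = {}"
    unfolding A'_def by auto
  have c: "card {x\<in>A. \<forall>q\<in>S. \<not> f q x} = card {x\<in>A. \<forall>q\<in>insert s S. \<not> f q x} + card {x\<in>A'. \<forall>q\<in>S. \<not> f q x}"
    unfolding split using disj insert.prems fA' by (intro card_Un_disjoint) auto
  have inj: "inj_on (insert s) (Pow S)" using insert.hyps(2)
    by (auto simp: inj_on_def)
  have d: "Pow S \<inter> insert s ` Pow S = {}" using insert.hyps(2) by auto
  have "(\<Sum>Q\<in>Pow (insert s S). (-1)^card Q * int (card {x\<in>A. \<forall>q\<in>Q. f q x}))
     = (\<Sum>Q\<in>Pow S. (-1)^card Q * int (card {x\<in>A. \<forall>q\<in>Q. f q x}))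
       + (\<Sum>Q\<in>insert s ` Pow S. (-1)^card Q * int (card {x\<in>A. \<forall>q\<in>Q. f q x}))"
    unfolding Pow_insert using d insert.hyps(1) by (intro sum.union_disjoint) auto
  also have "(\<Sum>Q\<in>insert s ` Pow S. (-1)^card Q * int (card {x\<in>A. \<forall>q\<in>Q. f q x}))
      = (\<Sum>Q\<in>Pow S. (-1)^card (insert s Q) * int (card {x\<in>A. \<forall>q\<in>insert s Q. f q x}))"
    using inj by (simp add: sum.reindex)
  also have "\<dots> = (\<Sum>Q\<in>Pow S. - ((-1)^card Q * int (card {x\<in>A'. \<forall>q\<in>Q. f q x})))"
  proof (rule sum.cong)
    fix Q assume Q: "Q \<in> Pow S"
    then have "finite Q" "s \<notin> Q" using insert.hyps finite_subset by auto
    moreover have "{x\<in>A. \<forall>q\<in>insert s Q. f q x} = {x\<in>A'. \<forall>q\<in>Q. f q x}" unfolding A'_def by auto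
    ultimately show "(-1)^card (insert s Q) * int (card {x\<in>A. \<forall>q\<in>insert s Q. f q x}) =
       - ((-1)^card Q * int (card {x\<in>A'. \<forall>q\<in>Q. f q x}))" by simp
  qed simp
  also have "\<dots> = - int (card {x\<in>A'. \<forall>q\<in>S. \<not> f q x})"
    using insert.IH[OF fA'] by (simp add: sum_negf)
  finally show ?case using insert.IH[OF insert.prems] c by simp
qed

lemma pres_comp:
  assumes "preserves V f \<phi>" "preserves V g \<phi>" "\<forall>v\<in>V. g v \<in> V"
  shows "preserves V (f \<circ> g) \<phi>"
  using assms unfolding preserves_def by simp

lemma pres_funpow:
  assumes "preserves V f \<phi>" "\<forall>v\<in>V. f v \<in> V"
  shows "preserves V (f ^^ n) \<phi> \<and> (\<forall>v\<in>V. (f ^^ n) v \<in> V)"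
proof (induction n)
  case 0 then show ?case by (simp add: preserves_def)
next
  case (Suc n) then show ?case using assms unfolding preserves_def by simp
qed


theorem theorem3:
  fixes V :: "'a set" and E :: "('a \<times> 'a) set" and \<rho> \<tau> :: "'a \<Rightarrow> 'a" and t :: nat
  assumes "graph V E"
    and "t \<ge> 1"
    and Aut_eq: "Aut V E = {\<rho> ^^ i | i. i < t} \<union> {\<tau> \<circ> (\<rho> ^^ i) | i. i < t}"
    and card_Aut: "card (Aut V E) = 2 * t"
    and ord_rho: "\<rho> ^^ t = id" "\<forall>j. 0 < j \<and> j < t \<longrightarrow> \<rho> ^^ j \<noteq> id"
    and tau_inv: "\<tau> \<circ> \<tau> = id"
    and rel: "\<forall>i<t. \<tau> \<circ> (\<rho> ^^ i) = (\<rho> ^^ (t - i)) \<circ> \<tau>"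
  defines "Pstar \<equiv> (\<lambda>p. \<rho> ^^ (t div p)) ` prime_factors t"
  shows "\<forall>k>0. (\<forall>i<t.
            int (N_eq V E k {id, \<tau> \<circ> (\<rho> ^^ i)}) =
              (\<Sum>P \<in> {P. {\<tau> \<circ> (\<rho> ^^ i)} \<subseteq> P \<and> P \<subseteq> {\<tau> \<circ> (\<rho> ^^ i)} \<union> Pstar}.
                 (-1) ^ (card P - 1) * int (N_ge V k P)))
        \<and> int (L V E k) =
            (\<Sum>P \<in> Pow Pstar. (-1) ^ card P * int (N_ge V k P))
            - (\<Sum>i<t. int (N_eq V E k {id, \<tau> \<circ> (\<rho> ^^ i)}))"
proof (intro allI impI)
  fix k :: nat
  define rot where "rot = (\<lambda>j. \<rho> ^^ j)"
  define r where "r = (\<lambda>j. \<tau> \<circ> \<rho> ^^ j)"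
  define Lab where "Lab = labelings V k"
  define Stab where "Stab = (\<lambda>\<phi>. {\<pi> \<in> Aut V E. preserves V \<pi> \<phi>})"
  have finV: "finite V" using assms(1) unfolding graph_def by simp
  have finLab: "finite Lab" unfolding Lab_def labelings_def using finV by (simp add: finite_PiE)
  have AutU: "Aut V E = rot ` {..<t} \<union> r ` {..<t}" unfolding Aut_eq rot_def r_def by auto
  have finA: "finite (rot ` {..<t})" "finite (r ` {..<t})" by auto
  have c1: "card (rot ` {..<t}) \<le> t" "card (r ` {..<t}) \<le> t"
    using card_image_le[of "{..<t}"] by auto
  have cU: "card (rot ` {..<t} \<union> r ` {..<t}) + card (rot ` {..<t} \<inter> r ` {..<t}) = card (rot ` {..<t}) + card (r ` {..<t})"
    using card_Un_Int[OF finA] by simp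
  have cc: "card (rot ` {..<t}) = t" "card (r ` {..<t}) = t" "card (rot ` {..<t} \<inter> r ` {..<t}) = 0"
    using cU c1 card_Aut[unfolded AutU] by linarith+
  have inj_rot: "inj_on rot {..<t}" using cc(1) by (intro eq_card_imp_inj_on) auto
  have inj_r: "inj_on r {..<t}" using cc(2) by (intro eq_card_imp_inj_on) auto
  have disj: "rot ` {..<t} \<inter> r ` {..<t} = {}" using cc(3) finA by simp
  have perm: "\<pi> permutes V" if "\<pi> \<in> Aut V E" for \<pi> using that unfolding Aut_def by simp
  have inV: "\<pi> v \<in> V" if "\<pi> \<in> Aut V E" "v \<in> V" for \<pi> v
    using perm[OF that(1)] that(2) by (simp add: permutes_in_image)
  have rot_mod: "rot j = rot (j mod t)" for j
  proof -
    have "rot j = rot (j mod t + t * (j div t))" by simp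
    also have "\<dots> = rot (j mod t)" unfolding rot_def funpow_add
      by (simp add: funpow_mult[symmetric] ord_rho(1))
    finally show ?thesis .
  qed
  have t0: "t > 0" using assms(2) by simp
  have rotA: "rot j \<in> Aut V E" for j using rot_mod[of j] AutU t0 by auto
  have rA: "r j \<in> Aut V E" if "j < t" for j using AutU that by auto
  have id_rot: "id = rot 0" unfolding rot_def by simp
  have idA: "id \<in> Aut V E" using rotA id_rot by metis
  have pres_id: "preserves V id \<phi>" for \<phi> unfolding preserves_def by simp
  have rot_ne_id: "rot j \<noteq> id" if "0 < j" "j < t" for j using ord_rho(2) that unfolding rot_def by auto
  have r_ne_rot: "r i \<noteq> rot j" if "i < t" "j < t" for i j using disj that by blast
  have r_ne_id: "r i \<noteq> id" if "i < t" for i using r_ne_rot[OF that t0] id_rot by metis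
  have r_inj: "r i = r j \<Longrightarrow> i < t \<Longrightarrow> j < t \<Longrightarrow> i = j" for i j using inj_r by (auto dest: inj_onD)
  have Pstar_rot: "q \<in> Pstar \<Longrightarrow> \<exists>j. 0 < j \<and> j < t \<and> q = rot j" for q
  proof -
    assume "q \<in> Pstar"
    then obtain p where p: "p \<in> prime_factors t" "q = rot (t div p)" unfolding Pstar_def rot_def by auto
    then have "prime p" "p dvd t" by auto
    then have "0 < t div p" "t div p < t" using t0 prime_gt_1_nat
      by (auto intro!: div_less_dividend simp: dvd_imp_le nat_dvd_not_less)
    with p show ?thesis by blast
  qed
  have lemA: "\<exists>q\<in>Pstar. preserves V q \<phi>" if m: "0 < m" "\<not> t dvd m" "preserves V (rot m) \<phi>" for m \<phi>
  proof -
    define d where "d = gcd m t"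
    obtain x y where xy: "m * x = t * y + d" using bezout_nat[of m t] m(1) unfolding d_def by auto
    have "preserves V ((rot m) ^^ x) \<phi>" using pres_funpow[OF m(3)] inV[OF rotA] by blast
    then have "preserves V (rot (m * x)) \<phi>" unfolding rot_def funpow_mult .
    moreover have "rot (m * x) = rot d" unfolding xy rot_def funpow_add
      by (simp add: funpow_mult[symmetric] ord_rho(1))
    ultimately have pd: "preserves V (rot d) \<phi>" by simp
    have "d dvd t" unfolding d_def by simp
    have "d \<noteq> t" using m(2) unfolding d_def by (metis gcd_dvd1)
    have "d > 0" using m(1) unfolding d_def by simp
    obtain e where e: "t = d * e" using \<open>d dvd t\<close> by blast
    have "e \<noteq> 1" using e \<open>d \<noteq> t\<close> by auto
    then obtain p where p: "prime p" "p dvd e" using prime_factor_nat by blast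
    then obtain c where c: "e = p * c" by blast
    have pt: "p \<in> prime_factors t" using p e t0 by (auto simp: in_prime_factors_iff)
    have "t div p = d * c" using e c p prime_gt_0_nat by auto
    then have "rot (t div p) = (rot d) ^^ c" unfolding rot_def funpow_mult by simp
    then have "preserves V (rot (t div p)) \<phi>" using pres_funpow[OF pd] inV[OF rotA] by metis
    moreover have "rot (t div p) \<in> Pstar" using pt unfolding Pstar_def rot_def by blast
    ultimately show ?thesis by blast
  qed
  have char: "Stab \<phi> = {id, r i} \<longleftrightarrow> preserves V (r i) \<phi> \<and> (\<forall>q\<in>Pstar. \<not> preserves V q \<phi>)"
    if i: "i < t" for i \<phi>
  proof
    assume S: "Stab \<phi> = {id, r i}"
    then have "r i \<in> Stab \<phi>" by simp
    then have "preserves V (r i) \<phi>" unfolding Stab_def by simp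
    moreover have "\<not> preserves V q \<phi>" if q: "q \<in> Pstar" for q
    proof
      assume pq: "preserves V q \<phi>"
      obtain j where j: "0 < j" "j < t" "q = rot j" using Pstar_rot[OF q] by blast
      then have "q \<in> Stab \<phi>" using pq rotA unfolding Stab_def by simp
      then show False using S j rot_ne_id r_ne_rot[OF i] by (metis insert_iff singletonD)
    qed
    ultimately show "preserves V (r i) \<phi> \<and> (\<forall>q\<in>Pstar. \<not> preserves V q \<phi>)" by blast
  next
    assume a: "preserves V (r i) \<phi> \<and> (\<forall>q\<in>Pstar. \<not> preserves V q \<phi>)"
    show "Stab \<phi> = {id, r i}"
    proof
      show "{id, r i} \<subseteq> Stab \<phi>" using a idA rA[OF i] pres_id unfolding Stab_def by auto
      show "Stab \<phi> \<subseteq> {id, r i}"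
      proof
        fix \<pi> assume \<pi>: "\<pi> \<in> Stab \<phi>"
        then have \<pi>A: "\<pi> \<in> Aut V E" and p\<pi>: "preserves V \<pi> \<phi>" unfolding Stab_def by auto
        then obtain j where j: "j < t" "\<pi> = rot j \<or> \<pi> = r j" using AutU by auto
        show "\<pi> \<in> {id, r i}"
        proof (cases "\<pi> = rot j")
          case True
          show ?thesis
          proof (cases "j = 0")
            case True with \<open>\<pi> = rot j\<close> id_rot show ?thesis by simp
          next
            case False
            then have "\<not> t dvd j" using j(1) by (auto dest: dvd_imp_le)
            then show ?thesis using lemA[of j \<phi>] False p\<pi> \<open>\<pi> = rot j\<close> a by auto
          qed
        next
          case False
          then have \<pi>r: "\<pi> = r j" using j by simp
          show ?thesis
          proof (cases "j = i")
            case True then show ?thesis using \<pi>r by simp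
          next
            case False
            have "preserves V (r i \<circ> r j) \<phi>"
              using pres_comp[of V "r i" \<phi> "r j"] a p\<pi> \<pi>r inV[OF rA[OF j(1)]] by auto
            moreover have "r i \<circ> r j = rot (t - i + j)"
            proof -
              have "r i \<circ> r j = (\<tau> \<circ> \<rho> ^^ i) \<circ> \<tau> \<circ> \<rho> ^^ j" unfolding r_def by (simp add: comp_assoc)
              also have "\<dots> = \<rho> ^^ (t - i) \<circ> (\<tau> \<circ> \<tau>) \<circ> \<rho> ^^ j" using rel i by (simp add: comp_assoc)
              also have "\<dots> = rot (t - i + j)" unfolding rot_def tau_inv by (simp add: funpow_add)
              finally show ?thesis .
            qed
            moreover have "0 < t - i + j" using i by simp
            moreover have "\<not> t dvd (t - i + j)"
            proof
              assume "t dvd (t - i + j)"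
              moreover have "t - i + j < 2 * t" using i j by simp
              moreover obtain c where c0: "t - i + j = t * c" using calculation(1) by (elim dvdE)
              ultimately have c: "t - i + j = t * c" "t * c < t * 2" "0 < t * c"
                using \<open>0 < t - i + j\<close> by (auto simp: mult.commute)
              then have "c < 2" "0 < c" using mult_less_cancel1 by auto
              then have "c = 1" by simp
              with c have "t - i + j = t" by simp
              then show False using False i j by simp
            qed
            ultimately show ?thesis using lemA[of "t - i + j" \<phi>] a by auto
          qed
        qed
      qed
    qed
  qed
  show "(\<forall>i<t.
            int (N_eq V E k {id, \<tau> \<circ> (\<rho> ^^ i)}) =
              (\<Sum>P \<in> {P. {\<tau> \<circ> (\<rho> ^^ i)} \<subseteq> P \<and> P \<subseteq> {\<tau> \<circ> (\<rho> ^^ i)} \<union> Pstar}.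
                 (-1) ^ (card P - 1) * int (N_ge V k P)))
        \<and> int (L V E k) =
            (\<Sum>P \<in> Pow Pstar. (-1) ^ card P * int (N_ge V k P))
            - (\<Sum>i<t. int (N_eq V E k {id, \<tau> \<circ> (\<rho> ^^ i)}))"
  proof
    have finP: "finite Pstar" unfolding Pstar_def by simp
    show "\<forall>i<t. int (N_eq V E k {id, \<tau> \<circ> (\<rho> ^^ i)}) =
              (\<Sum>P \<in> {P. {\<tau> \<circ> (\<rho> ^^ i)} \<subseteq> P \<and> P \<subseteq> {\<tau> \<circ> (\<rho> ^^ i)} \<union> Pstar}.
                 (-1) ^ (card P - 1) * int (N_ge V k P))"
    proof (intro allI impI)
      fix i assume i: "i < t"
      define A where "A = {\<phi> \<in> Lab. preserves V (r i) \<phi>}"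
      have finAA: "finite A" using finLab unfolding A_def by simp
      have riP: "r i \<notin> Pstar" using Pstar_rot r_ne_rot[OF i] by blast
      have "N_eq V E k {id, \<tau> \<circ> (\<rho> ^^ i)} = card {\<phi> \<in> Lab. Stab \<phi> = {id, r i}}"
        unfolding N_eq_def Lab_def Stab_def r_def ..
      also have "{\<phi> \<in> Lab. Stab \<phi> = {id, r i}} = {\<phi> \<in> A. \<forall>q\<in>Pstar. \<not> preserves V q \<phi>}"
        unfolding A_def using char[OF i] by auto
      finally have eq1: "N_eq V E k {id, \<tau> \<circ> (\<rho> ^^ i)} = card {\<phi> \<in> A. \<forall>q\<in>Pstar. \<not> preserves V q \<phi>}" .
      have "int (N_eq V E k {id, \<tau> \<circ> (\<rho> ^^ i)}) =
          (\<Sum>Q\<in>Pow Pstar. (-1)^card Q * int (card {\<phi>\<in>A. \<forall>q\<in>Q. preserves V q \<phi>}))"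
        unfolding eq1 by (rule ie_count[OF finP finAA])
      also have "\<dots> = (\<Sum>Q\<in>Pow Pstar. (-1) ^ (card (insert (r i) Q) - 1) * int (N_ge V k (insert (r i) Q)))"
      proof (rule sum.cong)
        fix Q assume Q: "Q \<in> Pow Pstar"
        then have "finite Q" "r i \<notin> Q" using finP riP finite_subset by auto
        moreover have "{\<phi>\<in>A. \<forall>q\<in>Q. preserves V q \<phi>} = {\<phi> \<in> labelings V k. \<forall>\<pi>\<in>insert (r i) Q. preserves V \<pi> \<phi>}"
          unfolding A_def Lab_def by auto
        ultimately show "(-1)^card Q * int (card {\<phi>\<in>A. \<forall>q\<in>Q. preserves V q \<phi>}) =
            (-1) ^ (card (insert (r i) Q) - 1) * int (N_ge V k (insert (r i) Q))"
          unfolding N_ge_def by simp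
      qed simp
      also have "\<dots> = (\<Sum>P \<in> insert (r i) ` Pow Pstar. (-1) ^ (card P - 1) * int (N_ge V k P))"
      proof -
        have "inj_on (insert (r i)) (Pow Pstar)" using riP unfolding inj_on_def by (metis Pow_iff insert_absorb insert_ident subset_iff)
        then show ?thesis by (simp add: sum.reindex)
      qed
      also have "insert (r i) ` Pow Pstar = {P. {\<tau> \<circ> (\<rho> ^^ i)} \<subseteq> P \<and> P \<subseteq> {\<tau> \<circ> (\<rho> ^^ i)} \<union> Pstar}"
      proof
        show "insert (r i) ` Pow Pstar \<subseteq> {P. {\<tau> \<circ> (\<rho> ^^ i)} \<subseteq> P \<and> P \<subseteq> {\<tau> \<circ> (\<rho> ^^ i)} \<union> Pstar}"
          unfolding r_def by auto
        show "{P. {\<tau> \<circ> (\<rho> ^^ i)} \<subseteq> P \<and> P \<subseteq> {\<tau> \<circ> (\<rho> ^^ i)} \<union> Pstar} \<subseteq> insert (r i) ` Pow Pstar"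
        proof
          fix P assume "P \<in> {P. {\<tau> \<circ> (\<rho> ^^ i)} \<subseteq> P \<and> P \<subseteq> {\<tau> \<circ> (\<rho> ^^ i)} \<union> Pstar}"
          then have "P = insert (r i) (P - {r i})" "P - {r i} \<in> Pow Pstar" unfolding r_def by auto
          then show "P \<in> insert (r i) ` Pow Pstar" by blast
        qed
      qed
      finally show "int (N_eq V E k {id, \<tau> \<circ> (\<rho> ^^ i)}) =
              (\<Sum>P \<in> {P. {\<tau> \<circ> (\<rho> ^^ i)} \<subseteq> P \<and> P \<subseteq> {\<tau> \<circ> (\<rho> ^^ i)} \<union> Pstar}.
                 (-1) ^ (card P - 1) * int (N_ge V k P))" .
    qed
    define B where "B = {\<phi> \<in> Lab. \<forall>q\<in>Pstar. \<not> preserves V q \<phi>}"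
    define D where "D = {\<phi> \<in> Lab. Stab \<phi> = {id}}"
    define U where "U = (\<lambda>i. {\<phi> \<in> Lab. Stab \<phi> = {id, r i}})"
    have LD: "L V E k = card D"
    proof -
      have "distinguishing V E \<phi> \<longleftrightarrow> Stab \<phi> = {id}" for \<phi>
        unfolding distinguishing_def Stab_def using idA pres_id by auto
      then show ?thesis unfolding L_def D_def Lab_def by simp
    qed
    have NU: "N_eq V E k {id, \<tau> \<circ> (\<rho> ^^ i)} = card (U i)" for i
      unfolding N_eq_def U_def Lab_def Stab_def r_def ..
    have BDU: "B = D \<union> (\<Union>i<t. U i)"
    proof
      show "D \<union> (\<Union>i<t. U i) \<subseteq> B"
      proof
        fix \<phi> assume "\<phi> \<in> D \<union> (\<Union>i<t. U i)"
        then consider "\<phi> \<in> D" | i where "i < t" "\<phi> \<in> U i" by blast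
        then show "\<phi> \<in> B"
        proof cases
          case 1
          then have "\<not> preserves V q \<phi>" if qP: "q \<in> Pstar" for q
          proof -
            obtain j where j: "0 < j" "j < t" "q = rot j" using Pstar_rot[OF qP] by blast
            show ?thesis
            proof
              assume "preserves V q \<phi>"
              then have "q \<in> Stab \<phi>" using rotA j unfolding Stab_def by simp
              then show False using 1 rot_ne_id[OF j(1,2)] j(3) unfolding D_def by simp
            qed
          qed
          then show ?thesis using 1 unfolding B_def D_def by simp
        next
          case 2
          then show ?thesis using char[OF 2(1)] unfolding B_def U_def by simp
        qed
      qed
      show "B \<subseteq> D \<union> (\<Union>i<t. U i)"
      proof
        fix \<phi> assume \<phi>: "\<phi> \<in> B"
        show "\<phi> \<in> D \<union> (\<Union>i<t. U i)"
        proof (cases "\<exists>i<t. preserves V (r i) \<phi>")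
          case True
          then obtain i where "i < t" "preserves V (r i) \<phi>" by blast
          then show ?thesis using char[of i \<phi>] \<phi> unfolding B_def U_def by auto
        next
          case False
          have "Stab \<phi> = {id}"
          proof
            show "{id} \<subseteq> Stab \<phi>" using idA pres_id unfolding Stab_def by simp
            show "Stab \<phi> \<subseteq> {id}"
            proof
              fix \<pi> assume \<pi>: "\<pi> \<in> Stab \<phi>"
              then have \<pi>A: "\<pi> \<in> Aut V E" and p\<pi>: "preserves V \<pi> \<phi>" unfolding Stab_def by auto
              then obtain j where j: "j < t" "\<pi> = rot j \<or> \<pi> = r j" using AutU by auto
              show "\<pi> \<in> {id}"
              proof (cases "\<pi> = rot j")
                case True
                show ?thesis
                proof (cases "j = 0")
                  case True with \<open>\<pi> = rot j\<close> id_rot show ?thesis by simp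
                next
                  case False
                  then have "\<not> t dvd j" using j(1) by (auto dest: dvd_imp_le)
                  then show ?thesis using lemA[of j \<phi>] False p\<pi> \<open>\<pi> = rot j\<close> \<phi> unfolding B_def by auto
                qed
              next
                case False
                then show ?thesis using j p\<pi> \<open>\<not> (\<exists>i<t. preserves V (r i) \<phi>)\<close> by auto
              qed
            qed
          qed
          then show ?thesis using \<phi> unfolding B_def D_def by simp
        qed
      qed
    qed
    have finU: "finite (U i)" for i using finLab unfolding U_def by simp
    have finD: "finite D" using finLab unfolding D_def by simp
    have disjU: "\<forall>i\<in>{..<t}. \<forall>j\<in>{..<t}. i \<noteq> j \<longrightarrow> U i \<inter> U j = {}"
    proof (intro ballI impI)
      fix i j assume ij: "i \<in> {..<t}" "j \<in> {..<t}" "i \<noteq> j"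
      have "{id, r i} \<noteq> {id, r j}"
      proof
        assume "{id, r i} = {id, r j}"
        then have "r i \<in> {id, r j}" by (metis insertI1 insertI2)
        then show False using r_ne_id r_inj ij by auto
      qed
      then show "U i \<inter> U j = {}" unfolding U_def by auto
    qed
    have disjDU: "D \<inter> (\<Union>i<t. U i) = {}"
    proof -
      have "{id} \<noteq> {id, r i}" if "i < t" for i using r_ne_id[OF that] by (metis insert_iff singletonD)
      then show ?thesis unfolding D_def U_def by auto
    qed
    have "card B = card D + (\<Sum>i<t. card (U i))"
      unfolding BDU using finU finD disjDU disjU
      by (simp add: card_Un_disjoint card_UN_disjoint)
    moreover have "int (card B) = (\<Sum>P \<in> Pow Pstar. (-1) ^ card P * int (N_ge V k P))"
      unfolding B_def N_ge_def Lab_def using ie_count[OF finP, of "labelings V k" "\<lambda>q \<phi>. preserves V q \<phi>"]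
        finLab unfolding Lab_def by simp
    ultimately show "int (L V E k) =
            (\<Sum>P \<in> Pow Pstar. (-1) ^ card P * int (N_ge V k P))
            - (\<Sum>i<t. int (N_eq V E k {id, \<tau> \<circ> (\<rho> ^^ i)}))"
      unfolding LD NU by simp
  qed
qed

end
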